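(* Let $G$ be a connected graph with girth at least $5$ and maximum degree $\Delta$, and suppose $G$ is not $\Delta$-regular (i.e. some vertex has degree at most $\Delta-1$). Then $\chi_D(G)\le\Delta+1$.
   Context: A $k$-coloring of $G$ is a map $\varphi:V(G)\to\{1,\dots,k\}$; it is proper if adjacent vertices get different colors, and distinguishing if the only automorphism $f$ of $G$ with $\varphi(f(v))=\varphi(v)$ for all $v$ is the identity. $\chi_D(G)$ is the smallest number of colors in a proper distinguishing coloring of $G$. *)

theory Defs
  imports Main
begin

definition simple_graph :: "'a set \<Rightarrow> ('a \<Rightarrow> 'a \<Rightarrow> bool) \<Rightarrow> bool" where
  "simple_graph V E \<longleftrightarrow> finite V \<and> (\<forall>u v. E u v \<longrightarrow> u \<in> V \<and> v \<in> V)
     \<and> (\<forall>u v. E u v \<longrightarrow> E v u) \<and> (\<forall>v. \<not> E v v)"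

definition connected_graph :: "'a set \<Rightarrow> ('a \<Rightarrow> 'a \<Rightarrow> bool) \<Rightarrow> bool" where
  "connected_graph V E \<longleftrightarrow> V \<noteq> {} \<and> (\<forall>u\<in>V. \<forall>v\<in>V. E\<^sup>*\<^sup>* u v)"

definition degree :: "'a set \<Rightarrow> ('a \<Rightarrow> 'a \<Rightarrow> bool) \<Rightarrow> 'a \<Rightarrow> nat" where
  "degree V E v = card {u \<in> V. E v u}"

definition max_degree :: "'a set \<Rightarrow> ('a \<Rightarrow> 'a \<Rightarrow> bool) \<Rightarrow> nat" where
  "max_degree V E = Max (degree V E ` V)"

definition is_cycle :: "'a set \<Rightarrow> ('a \<Rightarrow> 'a \<Rightarrow> bool) \<Rightarrow> 'a list \<Rightarrow> bool" where
  "is_cycle V E vs \<longleftrightarrow> length vs \<ge> 3 \<and> distinct vs \<and> set vs \<subseteq> V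
     \<and> (\<forall>i < length vs. E (vs ! i) (vs ! ((i + 1) mod length vs)))"

definition girth_at_least :: "'a set \<Rightarrow> ('a \<Rightarrow> 'a \<Rightarrow> bool) \<Rightarrow> nat \<Rightarrow> bool" where
  "girth_at_least V E k \<longleftrightarrow> (\<forall>vs. is_cycle V E vs \<longrightarrow> length vs \<ge> k)"

definition automorphism :: "'a set \<Rightarrow> ('a \<Rightarrow> 'a \<Rightarrow> bool) \<Rightarrow> ('a \<Rightarrow> 'a) \<Rightarrow> bool" where
  "automorphism V E f \<longleftrightarrow> bij_betw f V V \<and> (\<forall>u\<in>V. \<forall>v\<in>V. E (f u) (f v) \<longleftrightarrow> E u v)"

definition k_coloring :: "'a set \<Rightarrow> nat \<Rightarrow> ('a \<Rightarrow> nat) \<Rightarrow> bool" where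
  "k_coloring V k c \<longleftrightarrow> (\<forall>v\<in>V. c v \<in> {1..k})"

definition proper_coloring :: "'a set \<Rightarrow> ('a \<Rightarrow> 'a \<Rightarrow> bool) \<Rightarrow> ('a \<Rightarrow> nat) \<Rightarrow> bool" where
  "proper_coloring V E c \<longleftrightarrow> (\<forall>u\<in>V. \<forall>v\<in>V. E u v \<longrightarrow> c u \<noteq> c v)"

definition distinguishing_coloring :: "'a set \<Rightarrow> ('a \<Rightarrow> 'a \<Rightarrow> bool) \<Rightarrow> ('a \<Rightarrow> nat) \<Rightarrow> bool" where
  "distinguishing_coloring V E c \<longleftrightarrow>
     (\<forall>f. automorphism V E f \<and> (\<forall>v\<in>V. c (f v) = c v) \<longrightarrow> (\<forall>v\<in>V. f v = v))"

definition distinguishing_chromatic_number :: "'a set \<Rightarrow> ('a \<Rightarrow> 'a \<Rightarrow> bool) \<Rightarrow> nat" where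
  "distinguishing_chromatic_number V E =
     (LEAST k. \<exists>c. k_coloring V k c \<and> proper_coloring V E c \<and> distinguishing_coloring V E c)"

end

theory Submission
  imports Defs
begin

definition good :: "'a set \<Rightarrow> ('a \<Rightarrow> 'a \<Rightarrow> bool) \<Rightarrow> 'a \<Rightarrow> nat \<Rightarrow> 'a set \<Rightarrow> ('a \<Rightarrow> nat) \<Rightarrow> bool" where
 "good V E r D S c \<longleftrightarrow> r \<in> S \<and> S \<subseteq> V \<and> c r = Suc D \<and>
   (\<forall>v\<in>S. c v \<in> {1..Suc D}) \<and> (\<forall>v\<in>S. c v = Suc D \<longrightarrow> v = r \<or> degree V E v = D) \<and>
   (\<forall>u\<in>S. \<forall>v\<in>S. E u v \<longrightarrow> c u \<noteq> c v) \<and> (\<forall>v\<in>S - {r}. \<exists>q\<in>S. E v q) \<and>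
   (\<forall>c'. (\<forall>v\<in>S. c' v = c v) \<longrightarrow> (\<forall>v\<in>V. c' v = Suc D \<longrightarrow> v = r \<or> degree V E v = D) \<longrightarrow>
      (\<forall>f. automorphism V E f \<and> (\<forall>v\<in>V. c' (f v) = c' v) \<longrightarrow> (\<forall>v\<in>S. f v = v)))"

lemma avail: "finite X \<Longrightarrow> card X < card T \<Longrightarrow> \<exists>x\<in>T. x \<notin> X"
  by (metis card_mono not_le subsetI)

lemma deg_aut:
  assumes sg: "simple_graph V E" and a: "automorphism V E f" and v: "v \<in> V"
  shows "degree V E (f v) = degree V E v"
proof -
  have bij: "bij_betw f V V" and e: "\<forall>u\<in>V. \<forall>w\<in>V. E (f u) (f w) \<longleftrightarrow> E u w"
    using a unfolding automorphism_def by auto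
  have "{u \<in> V. E (f v) u} = f ` {u \<in> V. E v u}"
  proof
    show "{u \<in> V. E (f v) u} \<subseteq> f ` {u \<in> V. E v u}"
    proof
      fix u assume u: "u \<in> {u \<in> V. E (f v) u}"
      then obtain y where y: "y \<in> V" "u = f y" using bij bij_betw_imp_surj_on by blast
      then show "u \<in> f ` {u \<in> V. E v u}" using u e v by auto
    qed
    show "f ` {u \<in> V. E v u} \<subseteq> {u \<in> V. E (f v) u}"
      using e v bij bij_betw_imp_surj_on by fastforce
  qed
  moreover have "inj_on f {u \<in> V. E v u}"
    by (rule inj_on_subset[OF bij_betw_imp_inj_on[OF bij]]) auto
  ultimately show ?thesis unfolding degree_def by (metis card_image)
qed

lemma cross:
  assumes "E\<^sup>*\<^sup>* r v" "r \<in> S" "v \<notin> S" "simple_graph V E"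
  shows "\<exists>p\<in>S. \<exists>w. w \<in> V \<and> w \<notin> S \<and> E p w"
  using assms
proof (induction rule: rtranclp.induct)
  case (rtrancl_refl a) then show ?case by simp
next
  case (rtrancl_into_rtrancl a b c)
  show ?case
  proof (cases "b \<in> S")
    case True
    then show ?thesis using rtrancl_into_rtrancl unfolding simple_graph_def by blast
  next
    case False
    then show ?thesis using rtrancl_into_rtrancl by blast
  qed
qed

lemma no_c4:
  assumes sg: "simple_graph V E" and gi: "girth_at_least V E 5"
    and "a \<noteq> b" "E w a" "E w b" "E x a" "E x b" "w \<noteq> x"
  shows False
proof -
  have s: "\<And>u v. E u v \<Longrightarrow> E v u" and ir: "\<And>v. \<not> E v v" and inV: "\<And>u v. E u v \<Longrightarrow> u \<in> V \<and> v \<in> V"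
    using sg unfolding simple_graph_def by auto
  have d: "distinct [a, w, b, x]" using assms ir by auto
  have e: "\<forall>i<4. E ([a, w, b, x] ! i) ([a, w, b, x] ! ((i + 1) mod 4))"
  proof (intro allI impI)
    fix i :: nat assume "i < 4"
    then have "i = 0 \<or> i = 1 \<or> i = 2 \<or> i = 3" by auto
    then show "E ([a, w, b, x] ! i) ([a, w, b, x] ! ((i + 1) mod 4))" using assms s by auto
  qed
  have "is_cycle V E [a, w, b, x]"
    unfolding is_cycle_def using d e inV assms by auto
  then show False using gi unfolding girth_at_least_def by fastforce
qed

context
  fixes V :: "'a set" and E :: "'a \<Rightarrow> 'a \<Rightarrow> bool" and r :: 'a and D :: nat
  assumes sg: "simple_graph V E" and conn: "connected_graph V E" and gi: "girth_at_least V E 5"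
    and rV: "r \<in> V" and rdeg: "degree V E r < D" and maxd: "\<forall>v\<in>V. degree V E v \<le> D"
begin

lemma finV: "finite V" using sg unfolding simple_graph_def by auto
lemma sym: "E u v \<Longrightarrow> E v u" using sg unfolding simple_graph_def by auto
lemma irr: "\<not> E v v" using sg unfolding simple_graph_def by auto
lemma inV: "E u v \<Longrightarrow> u \<in> V \<and> v \<in> V" using sg unfolding simple_graph_def by auto

lemma init: "good V E r D {r} (\<lambda>_. Suc D)"
  unfolding good_def
proof (intro conjI ballI allI impI)
  fix c' f v
  assume c': "\<forall>v\<in>{r}. c' v = Suc D" and q: "\<forall>v\<in>V. c' v = Suc D \<longrightarrow> v = r \<or> degree V E v = D"
    and a: "automorphism V E f \<and> (\<forall>v\<in>V. c' (f v) = c' v)" and v: "v \<in> {r}"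
  have fr: "f r \<in> V" using a rV unfolding automorphism_def bij_betw_def by auto
  have "c' (f r) = Suc D" using a c' rV by auto
  moreover have "degree V E (f r) = degree V E r" using deg_aut[OF sg] a rV by auto
  ultimately show "f v = v" using q fr rdeg v by fastforce
qed (use rV rdeg irr in auto)

lemma step:
  assumes g: "good V E r D S c" and ne: "S \<noteq> V"
  shows "\<exists>S' c'. good V E r D S' c' \<and> S \<subset> S'"
proof -
  have rS: "r \<in> S" and SV: "S \<subseteq> V" and c1: "\<forall>v\<in>S. c v \<in> {1..Suc D}"
    and c2: "\<forall>v\<in>S. c v = Suc D \<longrightarrow> v = r \<or> degree V E v = D"
    and pr: "\<forall>u\<in>S. \<forall>v\<in>S. E u v \<longrightarrow> c u \<noteq> c v" and nb: "\<forall>v\<in>S - {r}. \<exists>q\<in>S. E v q"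
    and fx: "\<And>c' f. (\<forall>v\<in>S. c' v = c v) \<Longrightarrow> (\<forall>v\<in>V. c' v = Suc D \<longrightarrow> v = r \<or> degree V E v = D) \<Longrightarrow>
      automorphism V E f \<Longrightarrow> (\<forall>v\<in>V. c' (f v) = c' v) \<Longrightarrow> (\<forall>v\<in>S. f v = v)"
    using g unfolding good_def by blast+
  have finS: "finite S" using SV finV finite_subset by blast
  show ?thesis
  proof (cases "\<exists>w\<in>V - S. \<exists>a\<in>S. \<exists>b\<in>S. a \<noteq> b \<and> E w a \<and> E w b")
    case True
    then obtain w a b where w: "w \<in> V" "w \<notin> S" and ab: "a \<in> S" "b \<in> S" "a \<noteq> b" "E w a" "E w b" by blast
    define T where "T = (if degree V E w = D then {1..Suc D} else {1..D})"
    define X where "X = c ` {u \<in> S. E w u}"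
    have "card X \<le> card {u \<in> S. E w u}" unfolding X_def using finS by (intro card_image_le) auto
    also have "\<dots> \<le> degree V E w" unfolding degree_def
      by (rule card_mono) (use finV SV in auto)
    finally have cX: "card X \<le> degree V E w" .
    have "card X < card T"
    proof (cases "degree V E w = D")
      case True then show ?thesis using cX unfolding T_def by simp
    next
      case False
      then have "degree V E w < D" using maxd w by (meson le_neq_implies_less)
      then show ?thesis using cX False unfolding T_def by simp
    qed
    moreover have "finite X" unfolding X_def using finS by simp
    ultimately obtain x where x: "x \<in> T" "x \<notin> X" using avail by blast
    define c2' where "c2' = c(w := x)"
    have "good V E r D (insert w S) c2'"
      unfolding good_def
    proof (intro conjI ballI allI impI)
      show "r \<in> insert w S" using rS by auto
      show "insert w S \<subseteq> V" using SV w by auto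
      show "c2' r = Suc D" using g w rS unfolding good_def c2'_def by auto
      fix v assume v: "v \<in> insert w S"
      show "c2' v \<in> {1..Suc D}" using v c1 x T_def c2'_def by (auto split: if_splits)
    next
      fix v assume v: "v \<in> insert w S" "c2' v = Suc D"
      then show "v = r \<or> degree V E v = D" using c2 x T_def c2'_def w by (auto split: if_splits)
    next
      fix u v assume uv: "u \<in> insert w S" "v \<in> insert w S" "E u v"
      have vu: "E v u" using uv(3) sym by blast
      have xw: "\<forall>y\<in>S. E w y \<longrightarrow> c y \<noteq> x" using x X_def by auto
      show "c2' u \<noteq> c2' v" using uv vu pr xw c2'_def w irr by (auto simp: image_iff) 
    next
      fix v assume "v \<in> insert w S - {r}"
      then show "\<exists>q\<in>insert w S. E v q" using nb ab by auto
    next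
      fix c' f v
      assume c': "\<forall>v\<in>insert w S. c' v = c2' v" and q: "\<forall>v\<in>V. c' v = Suc D \<longrightarrow> v = r \<or> degree V E v = D"
        and a: "automorphism V E f \<and> (\<forall>v\<in>V. c' (f v) = c' v)" and v: "v \<in> insert w S"
      have cS: "\<forall>v\<in>S. c' v = c v" using c' w c2'_def by auto
      have fS: "\<forall>v\<in>S. f v = v" using fx[OF cS q] a by blast
      have e: "\<forall>u\<in>V. \<forall>y\<in>V. E (f u) (f y) \<longleftrightarrow> E u y" using a unfolding automorphism_def by blast
      have "E (f w) a" using e w ab fS SV by (metis subsetD)
      moreover have "E (f w) b" using e w ab fS SV by (metis subsetD)
      ultimately have "f w = w" using no_c4[OF sg gi, of a b w "f w"] ab by metis
      then show "f v = v" using v fS by auto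
    qed
    then show ?thesis using w by blast
  next
    case False
    obtain v where v: "v \<in> V" "v \<notin> S" using ne SV by blast
    have "E\<^sup>*\<^sup>* r v" using conn rV v unfolding connected_graph_def by blast
    then obtain p w0 where p: "p \<in> S" "w0 \<in> V" "w0 \<notin> S" "E p w0" using cross[OF _ rS v(2) sg] by blast
    define B where "B = {u \<in> V. u \<notin> S \<and> E p u}"
    define T where "T = {1..D} - {c p}"
    have finB: "finite B" using finV B_def by auto
    have cardB: "card B \<le> card T"
    proof (cases "p = r")
      case True
      have "card B \<le> degree V E r" unfolding degree_def B_def True
        by (rule card_mono) (use finV in auto)
      moreover have "c p = Suc D" using True g unfolding good_def by blast
      ultimately show ?thesis using rdeg unfolding T_def by auto
    next
      case False
      obtain q where q: "q \<in> S" "E p q" using nb p False by blast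
      have "B \<subseteq> {u \<in> V. E p u} - {q}" using q B_def by auto
      then have "card B \<le> card ({u \<in> V. E p u} - {q})" by (intro card_mono) (use finV in auto)
      also have "\<dots> = degree V E p - 1" unfolding degree_def using q inV finV by (auto simp: card_Diff_singleton)
      finally have "card B \<le> D - 1" using maxd p SV by force
      moreover have "card T \<ge> D - 1" unfolding T_def by (simp add: card_Diff_singleton_if)
      ultimately show ?thesis by linarith
    qed
    then obtain gg where gg: "gg ` B \<subseteq> T" "inj_on gg B" using card_le_inj[OF finB _ cardB] unfolding T_def by blast
    define c2' where "c2' = (\<lambda>v. if v \<in> B then gg v else c v)"
    have uniq: "\<And>u y. u \<in> B \<Longrightarrow> y \<in> S \<Longrightarrow> E u y \<Longrightarrow> y = p"
      using False p B_def sym by blast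
    have "good V E r D (S \<union> B) c2'"
      unfolding good_def
    proof (intro conjI ballI allI impI)
      show "r \<in> S \<union> B" using rS by auto
      show "S \<union> B \<subseteq> V" using SV B_def by auto
      show "c2' r = Suc D" using g rS unfolding good_def c2'_def B_def by auto
      fix v assume v: "v \<in> S \<union> B"
      show "c2' v \<in> {1..Suc D}" using v c1 gg T_def c2'_def by (auto split: if_splits)
    next
      fix v assume v: "v \<in> S \<union> B" "c2' v = Suc D"
      then show "v = r \<or> degree V E v = D" using c2 gg T_def c2'_def B_def by (auto split: if_splits)
    next
      fix u v assume uv: "u \<in> S \<union> B" "v \<in> S \<union> B" "E u v"
      show "c2' u \<noteq> c2' v"
      proof (cases "u \<in> B")
        case uB: True
        show ?thesis
        proof (cases "v \<in> B")
          case True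
          then show ?thesis using uB gg(2) uv irr c2'_def by (metis inj_on_contraD)
        next
          case False
          then have "v \<in> S" "v = p" using uv uniq uB by auto
          then show ?thesis using uB False gg T_def c2'_def by auto
        qed
      next
        case uS: False
        show ?thesis
        proof (cases "v \<in> B")
          case True
          then have "u \<in> S" "u = p" using uv uniq uS sym by auto
          then show ?thesis using uS True gg T_def c2'_def by auto
        next
          case False
          then show ?thesis using uS uv pr c2'_def by auto
        qed
      qed
    next
      fix v assume "v \<in> S \<union> B - {r}"
      then show "\<exists>q\<in>S \<union> B. E v q" using nb p B_def sym by auto
    next
      fix c' f v
      assume c': "\<forall>v\<in>S \<union> B. c' v = c2' v" and q: "\<forall>v\<in>V. c' v = Suc D \<longrightarrow> v = r \<or> degree V E v = D"
        and a: "automorphism V E f \<and> (\<forall>v\<in>V. c' (f v) = c' v)" and v: "v \<in> S \<union> B"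
      have cS: "\<forall>v\<in>S. c' v = c v" using c' B_def c2'_def by auto
      have fS: "\<forall>v\<in>S. f v = v" using fx[OF cS q] a by blast
      have e: "\<forall>u\<in>V. \<forall>y\<in>V. E (f u) (f y) \<longleftrightarrow> E u y" and bij: "bij_betw f V V"
        using a unfolding automorphism_def by blast+
      show "f v = v"
      proof (cases "v \<in> B")
        case False then show ?thesis using v fS by auto
      next
        case True
        have vV: "v \<in> V" using True B_def by auto
        have fvV: "f v \<in> V" using bij vV bij_betw_apply by fastforce
        have "E p (f v)" using e True B_def p SV fS by (metis (no_types, lifting) mem_Collect_eq subsetD)
        moreover have "f v \<notin> S"
        proof
          assume fvS: "f v \<in> S"
          then have "f (f v) = f v" using fS by auto
          then have "f v = v" using bij_betw_imp_inj_on[OF bij] fvV vV inj_onD by metis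
          then show False using fvS True B_def by auto
        qed
        ultimately have fvB: "f v \<in> B" using fvV B_def by auto
        have "c' (f v) = c' v" using a vV by auto
        then have "gg (f v) = gg v" using c' fvB True c2'_def by auto
        then show ?thesis using gg(2) fvB True inj_onD by metis
      qed
    qed
    moreover have "w0 \<in> B" using p B_def by auto
    ultimately show ?thesis using p by blast
  qed
qed

lemma reach: "good V E r D S c \<Longrightarrow> \<exists>c'. good V E r D V c'"
proof (induction "card (V - S)" arbitrary: S c rule: less_induct)
  case less
  show ?case
  proof (cases "S = V")
    case True then show ?thesis using less by blast
  next
    case False
    then obtain S' c' where s: "good V E r D S' c'" "S \<subset> S'" using step less by blast
    have "S' \<subseteq> V" using s unfolding good_def by auto
    then have "V - S' \<subset> V - S" using s by blast
    then have "card (V - S') < card (V - S)" using finV by (meson finite_Diff psubset_card_mono)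
    then show ?thesis using less s by blast
  qed
qed

lemma final: "distinguishing_chromatic_number V E \<le> Suc D"
proof -
  obtain c where g: "good V E r D V c" using reach init by blast
  have "k_coloring V (Suc D) c" using g unfolding good_def k_coloring_def by blast
  moreover have "proper_coloring V E c" using g unfolding good_def proper_coloring_def by blast
  moreover have "distinguishing_coloring V E c"
    using g unfolding good_def distinguishing_coloring_def by blast
  ultimately show ?thesis unfolding distinguishing_chromatic_number_def by (intro Least_le) blast
qed

end

theorem mainTheorem7:
  fixes V :: "'a set" and E :: "'a \<Rightarrow> 'a \<Rightarrow> bool"
  assumes "simple_graph V E"
    and "connected_graph V E"
    and "girth_at_least V E 5"
    and "\<exists>v\<in>V. degree V E v < max_degree V E"
  shows "distinguishing_chromatic_number V E \<le> max_degree V E + 1"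
proof -
  obtain r where r: "r \<in> V" "degree V E r < max_degree V E" using assms(4) by blast
  have fin: "finite V" using assms(1) unfolding simple_graph_def by auto
  have "\<forall>v\<in>V. degree V E v \<le> max_degree V E" unfolding max_degree_def using fin by auto
  then show ?thesis using final[OF assms(1-3) r] by simp
qed

end
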